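(* Let $2\le n<d$ with $n=2$ or $n$ odd, let $n'=\min\{2n-1,d\}$, let $t$ be as defined below, let $E\in\mathrm{SL}(d,q)$ and put $T:=t^E=E^{-1}tE$. Suppose $T$ is a weak doubling element. Then: (1) $\dim(V_n\cap \mathrm{Fix}(T))\ge 1$, and if $n'<d$ then $\dim(V_n\cap\mathrm{Fix}(T))=1$; (2) if $n'<d$, then $\dim(F_{d-n}\cap \mathrm{Fix}(T))=d-n'$.
   Context: Vectors are row vectors and matrices act from the right; $\mathrm{Fix}(g)=\{x\in\mathbb{F}_q^d: xg=x\}$. $e_1,\dots,e_d$ is the standard basis of $V=\mathbb{F}_q^d$, $V_n=\langle e_1,\dots,e_n\rangle$, $F_{d-n}=\langle e_{n+1},\dots,e_d\rangle$, and $n'=\min\{2n-1,d\}$. An element $c\in\mathrm{GL}(d,q)$ is a weak doubling element if (C1) $\dim(V_n+V_nc)=n'$ and (C2) if $n'<d$ then $\dim(F_{d-n}+\mathrm{Fix}(c))=d$. $E_{i,j}(\lambda)$ is the identity matrix with $(i,j)$ entry replaced by $\lambda$ ($i\ne j$). The element $t$ is: $E_{1,2}(1)$ if $n=2$; $\operatorname{diag}(z_1,I_{d-n})$ if $n>2$ and $p=2$; $\operatorname{diag}(z_2,I_{d-n})$ if $n>2$ and $p$ odd, where ($P_\sigma$ being the $n\times n$ matrix with $e_iP_\sigma=e_{\sigma(i)}$) $z_1=P_{(1,n,n-1,\dots,2)}$ with $(1,n)$ entry changed to $-1$ if $n$ is even, and $z_2=P_{(2,n,n-1,\dots,3)}$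 with $(2,n)$ entry changed to $-1$ if $n$ is odd. In particular $\dim\mathrm{Fix}(t)=d-n+1$. *)

theory Defs
  imports "Jordan_Normal_Form.VS_Connect" "Jordan_Normal_Form.Gauss_Jordan_Elimination"
begin

text \<open>Conventions: vectors of V = F_q^d are elements of carrier_vec d (type 'a vec),
  matrices are 'a mat; indices are 0-based, so the paper's basis vector e_i is
  unit_vec d (i - 1).  Vectors are row vectors and matrices act from the right:
  the row vector x times g is computed as transpose g times the column x.\<close>

definition vmul :: "'a::comm_semiring_0 vec \<Rightarrow> 'a mat \<Rightarrow> 'a vec" where
  "vmul x g = transpose_mat g *\<^sub>v x"

definition subdim :: "nat \<Rightarrow> 'a::field vec set \<Rightarrow> nat" where
  "subdim d W = vectorspace.dim class_ring ((module_vec TYPE('a) d)\<lparr>carrier := W\<rparr>)"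

definition fixsp :: "nat \<Rightarrow> 'a::field mat \<Rightarrow> 'a vec set" where
  "fixsp d g = {x \<in> carrier_vec d. vmul x g = x}"

definition Vsp :: "nat \<Rightarrow> nat \<Rightarrow> 'a::field vec set" where
  "Vsp d n = {x \<in> carrier_vec d. \<forall>i. n \<le> i \<and> i < d \<longrightarrow> x $ i = 0}"

definition Fsp :: "nat \<Rightarrow> nat \<Rightarrow> 'a::field vec set" where
  "Fsp d n = {x \<in> carrier_vec d. \<forall>i. i < n \<longrightarrow> x $ i = 0}"

definition setsum_vec :: "'a::field vec set \<Rightarrow> 'a vec set \<Rightarrow> 'a vec set" where
  "setsum_vec A B = {a + b | a b. a \<in> A \<and> b \<in> B}"

definition img :: "'a::field vec set \<Rightarrow> 'a mat \<Rightarrow> 'a vec set" where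
  "img A c = (\<lambda>x. vmul x c) ` A"

definition nprime :: "nat \<Rightarrow> nat \<Rightarrow> nat" where
  "nprime n d = min (2 * n - 1) d"

definition weak_doubling :: "nat \<Rightarrow> nat \<Rightarrow> 'a::field mat \<Rightarrow> bool" where
  "weak_doubling d n c \<longleftrightarrow>
     subdim d (setsum_vec (Vsp d n) (img (Vsp d n) c)) = nprime n d \<and>
     (nprime n d < d \<longrightarrow> subdim d (setsum_vec (Fsp d n) (fixsp d c)) = d)"

definition elem_mat :: "nat \<Rightarrow> nat \<Rightarrow> nat \<Rightarrow> 'a::field \<Rightarrow> 'a mat" where
  "elem_mat d i j l = mat d d (\<lambda>(a, b). if a = i \<and> b = j then l else if a = b then 1 else 0)"

text \<open>P_sigma with e_i P_sigma = e_(sigma i): row i has its 1 in column sigma i.\<close>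
definition perm_mat :: "nat \<Rightarrow> (nat \<Rightarrow> nat) \<Rightarrow> 'a::field mat" where
  "perm_mat n \<sigma> = mat n n (\<lambda>(i, j). if j = \<sigma> i then 1 else 0)"

text \<open>sigma1 = cycle (1,n,n-1,...,2), 0-based: 0 -> n-1, k -> k-1 (1 <= k <= n-1)\<close>
definition sigma1 :: "nat \<Rightarrow> nat \<Rightarrow> nat" where
  "sigma1 n k = (if k = 0 then n - 1 else k - 1)"

text \<open>sigma2 = cycle (2,n,n-1,...,3), 0-based: 0 -> 0, 1 -> n-1, k -> k-1 (2 <= k <= n-1)\<close>
definition sigma2 :: "nat \<Rightarrow> nat \<Rightarrow> nat" where
  "sigma2 n k = (if k = 0 then 0 else if k = 1 then n - 1 else k - 1)"

definition z1 :: "nat \<Rightarrow> 'a::field mat" where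
  "z1 n = (let P = perm_mat n (sigma1 n) in
           if even n then mat n n (\<lambda>(i, j). if i = 0 \<and> j = n - 1 then -1 else P $$ (i, j)) else P)"

definition z2 :: "nat \<Rightarrow> 'a::field mat" where
  "z2 n = (let P = perm_mat n (sigma2 n) in
           if odd n then mat n n (\<lambda>(i, j). if i = 1 \<and> j = n - 1 then -1 else P $$ (i, j)) else P)"

definition diag_block :: "nat \<Rightarrow> 'a::field mat \<Rightarrow> 'a mat" where
  "diag_block d z = four_block_mat z (0\<^sub>m (dim_row z) (d - dim_row z)) (0\<^sub>m (d - dim_row z) (dim_row z)) (1\<^sub>m (d - dim_row z))"

definition tmat :: "nat \<Rightarrow> nat \<Rightarrow> 'a::{field,finite} mat" where
  "tmat d n = (if n = 2 then elem_mat d 0 1 1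
               else if CHAR('a) = 2 then diag_block d (z1 n)
               else diag_block d (z2 n))"

end

theory Submission
  imports Defs
begin
lemma ring_minus_zero_eq:
  assumes "ring R" "a \<in> carrier R" "b \<in> carrier R" "a \<ominus>\<^bsub>R\<^esub> b = \<zero>\<^bsub>R\<^esub>"
  shows "a = b"
proof -
  interpret ring R by fact
  show ?thesis using assms(2-) by (metis a_minus_def add.inv_closed minus_equality r_neg)
qed

lemma (in vectorspace) card_carrier_dim:
  assumes finV: "finite (carrier V)" and finK: "finite (carrier K)"
  shows "card (carrier V) = card (carrier K) ^ dim"
proof -
  have gen: "span (carrier V) = carrier V"
    using span_closed span_mem by blast
  have "fin_dim" unfolding fin_dim_def using finV gen by blast
  then obtain \<beta> where fb: "finite \<beta>" and b: "basis \<beta>" using finite_basis_exists by blast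
  have dimb: "dim = card \<beta>" using dim_basis[OF fb b] .
  have bC: "\<beta> \<subseteq> carrier V" and li: "lin_indpt \<beta>" and gs: "span \<beta> = carrier V"
    using b unfolding basis_def by auto
  let ?P = "PiE \<beta> (\<lambda>_. carrier K)"
  have "bij_betw (\<lambda>a. lincomb a \<beta>) ?P (carrier V)"
  proof (rule bij_betw_imageI)
    show "inj_on (\<lambda>a. lincomb a \<beta>) ?P"
    proof (rule inj_onI)
      fix a b assume a: "a \<in> ?P" and bb: "b \<in> ?P" and eq: "lincomb a \<beta> = lincomb b \<beta>"
      have aP: "a \<in> \<beta> \<rightarrow> carrier K" and bP: "b \<in> \<beta> \<rightarrow> carrier K" using a bb by auto
      have "lincomb (\<lambda>v. a v \<ominus>\<^bsub>K\<^esub> b v) \<beta> = lincomb a \<beta> \<ominus>\<^bsub>V\<^esub> lincomb b \<beta>"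
        by (rule lincomb_diff[OF fb bC aP bP])
      also have "\<dots> = \<zero>\<^bsub>V\<^esub>" using eq lincomb_closed[OF bC aP] by (simp add: M.r_neg M.minus_eq)
      finally have z: "lincomb (\<lambda>v. a v \<ominus>\<^bsub>K\<^esub> b v) \<beta> = \<zero>\<^bsub>V\<^esub>" .
      have "(\<lambda>v. a v \<ominus>\<^bsub>K\<^esub> b v) \<in> \<beta> \<rightarrow> carrier K" using aP bP by auto
      from not_lindepD[OF li fb subset_refl this z]
      have "\<forall>v\<in>\<beta>. a v = b v" using aP bP ring_minus_zero_eq[of K] by force
      then show "a = b" using a bb by (auto intro: PiE_ext)
    qed
    show "(\<lambda>a. lincomb a \<beta>) ` ?P = carrier V"
    proof
      show "(\<lambda>a. lincomb a \<beta>) ` ?P \<subseteq> carrier V" using bC by auto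
      show "carrier V \<subseteq> (\<lambda>a. lincomb a \<beta>) ` ?P"
      proof
        fix v assume "v \<in> carrier V"
        then have "v \<in> span \<beta>" using gs by simp
        then obtain a where aP: "a \<in> \<beta> \<rightarrow> carrier K" and v: "lincomb a \<beta> = v"
          using finite_in_span[OF fb bC] by blast
        have "lincomb (restrict a \<beta>) \<beta> = lincomb a \<beta>"
          by (rule lincomb_cong) (use aP bC in auto)
        moreover have "restrict a \<beta> \<in> ?P" using aP by auto
        ultimately show "v \<in> (\<lambda>a. lincomb a \<beta>) ` ?P" using v by (metis image_eqI)
      qed
    qed
  qed
  then have "card (carrier V) = card ?P" by (simp add: bij_betw_same_card)
  also have "\<dots> = card (carrier K) ^ card \<beta>" by (simp add: card_PiE fb)
  finally show ?thesis using dimb by simp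
qed

definition subsp :: "nat \<Rightarrow> 'a::field vec set \<Rightarrow> bool" where
  "subsp d W \<longleftrightarrow> W \<subseteq> carrier_vec d \<and> 0\<^sub>v d \<in> W \<and> (\<forall>x\<in>W. \<forall>y\<in>W. x + y \<in> W)
     \<and> (\<forall>c. \<forall>x\<in>W. c \<cdot>\<^sub>v x \<in> W)"

lemma bij_vec_PiE:
  "bij_betw (\<lambda>f. vec d f) (PiE {..<d} A) {x \<in> carrier_vec d. \<forall>i<d. x $ i \<in> A i}"
proof (rule bij_betw_imageI)
  show "inj_on (\<lambda>f. vec d f) (PiE {..<d} A)"
  proof (rule inj_onI)
    fix f g assume f: "f \<in> PiE {..<d} A" and g: "g \<in> PiE {..<d} A" and e: "vec d f = vec d g"
    have "\<forall>i<d. f i = g i" using e by (metis index_vec)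
    then show "f = g" by (intro PiE_ext[OF f g]) auto
  qed
  show "(\<lambda>f. vec d f) ` PiE {..<d} A = {x \<in> carrier_vec d. \<forall>i<d. x $ i \<in> A i}"
  proof
    show "(\<lambda>f. vec d f) ` PiE {..<d} A \<subseteq> {x \<in> carrier_vec d. \<forall>i<d. x $ i \<in> A i}"
    proof
      fix x assume "x \<in> (\<lambda>f. vec d f) ` PiE {..<d} A"
      then obtain f where f: "f \<in> PiE {..<d} A" and xf: "x = vec d f" by blast
      have "\<forall>i<d. x $ i \<in> A i" using f xf by (simp add: PiE_mem)
      then show "x \<in> {x \<in> carrier_vec d. \<forall>i<d. x $ i \<in> A i}" using xf by simp
    qed
    show "{x \<in> carrier_vec d. \<forall>i<d. x $ i \<in> A i} \<subseteq> (\<lambda>f. vec d f) ` PiE {..<d} A"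
    proof
      fix x assume x: "x \<in> {x \<in> carrier_vec d. \<forall>i<d. x $ i \<in> A i}"
      have "x = vec d (restrict (($) x) {..<d})" using x by (intro eq_vecI) simp_all
      moreover have "restrict (($) x) {..<d} \<in> PiE {..<d} A" using x by (simp add: PiE_iff)
      ultimately show "x \<in> (\<lambda>f. vec d f) ` PiE {..<d} A" by (metis image_eqI)
    qed
  qed
qed

lemma card_vec_constr:
  fixes A :: "nat \<Rightarrow> 'a::finite set"
  shows "card {x \<in> carrier_vec d. \<forall>i<d. x $ i \<in> A i} = (\<Prod>i<d. card (A i))"
  using bij_betw_same_card[OF bij_vec_PiE[of d A]] by (simp add: card_PiE)

lemma finite_carrier_vec[simp]: "finite (carrier_vec d :: 'a::finite vec set)"
proof -
  have "carrier_vec d = (\<lambda>f. vec d f) ` PiE {..<d} (\<lambda>_. UNIV::'a set)"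
    using bij_betw_imp_surj_on[OF bij_vec_PiE[of d "\<lambda>_. UNIV::'a set"]] by simp
  then show ?thesis by (simp add: finite_PiE)
qed

lemma card_subsp:
  fixes W :: "'a::{field,finite} vec set"
  assumes "subsp d W"
  shows "card W = card (UNIV::'a set) ^ subdim d W"
proof -
  interpret vec_space "TYPE('a)" d .
  have WC: "W \<subseteq> carrier_vec d" using assms unfolding subsp_def by auto
  have "submodule class_ring W V"
    by (rule submodule.intro) (use assms vec_module in \<open>auto simp: subsp_def\<close>)
  then have "subspace class_ring W V" by (simp add: subspace_def vectorspace_axioms)
  then have vs: "vectorspace class_ring (V\<lparr>carrier := W\<rparr>)" by (rule subspace_is_vs)
  have finW: "finite W" by (rule finite_subset[OF WC]) simp
  have "card (carrier (V\<lparr>carrier := W\<rparr>)) = card (carrier (class_ring::'a ring)) ^ vectorspace.dim class_ring (V\<lparr>carrier := W\<rparr>)"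
    by (rule vectorspace.card_carrier_dim[OF vs]) (simp_all add: finW class_ring_simps)
  then show ?thesis unfolding subdim_def by (simp add: class_ring_simps)
qed

lemma vec_eq_idx: "x \<in> carrier_vec d \<Longrightarrow> y \<in> carrier_vec d \<Longrightarrow> x = y \<longleftrightarrow> (\<forall>i<d. x $ i = y $ i)"
  by (auto intro: eq_vecI)

lemma subsp_sub: assumes "subsp d W" "x \<in> W" "y \<in> W" shows "x - y \<in> W"
proof -
  have c: "x \<in> carrier_vec d" "y \<in> carrier_vec d" using assms unfolding subsp_def by auto
  have "x + (-1) \<cdot>\<^sub>v y \<in> W" using assms unfolding subsp_def by auto
  moreover have "x + (-1) \<cdot>\<^sub>v y = x - y" using c by (intro eq_vecI) auto
  ultimately show ?thesis by simp
qed

lemma subsp_carrier: "subsp d W \<Longrightarrow> x \<in> W \<Longrightarrow> x \<in> carrier_vec d"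
  unfolding subsp_def by auto

lemma card_sum_int:
  fixes A B :: "'a::{field,finite} vec set"
  assumes sA: "subsp d A" and sB: "subsp d B"
  shows "card (setsum_vec A B) * card (A \<inter> B) = card A * card B"
proof -
  let ?S = "setsum_vec A B"
  let ?F = "\<lambda>s. {p \<in> A \<times> B. fst p + snd p = s}"
  have AC: "A \<subseteq> carrier_vec d" and BC: "B \<subseteq> carrier_vec d"
    using sA sB unfolding subsp_def by auto
  have fA: "finite A" by (rule finite_subset[OF AC]) simp
  have fB: "finite B" by (rule finite_subset[OF BC]) simp
  have Seq: "?S = (\<lambda>p. fst p + snd p) ` (A \<times> B)" unfolding setsum_vec_def by force
  have fS: "finite ?S" unfolding Seq using fA fB by simp
  have U: "(\<Union>s\<in>?S. ?F s) = A \<times> B"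
  proof
    show "(\<Union>s\<in>?S. ?F s) \<subseteq> A \<times> B" by blast
    show "A \<times> B \<subseteq> (\<Union>s\<in>?S. ?F s)"
    proof
      fix p assume p: "p \<in> A \<times> B"
      then have "fst p + snd p \<in> ?S" unfolding Seq by blast
      moreover have "p \<in> ?F (fst p + snd p)" using p by blast
      ultimately show "p \<in> (\<Union>s\<in>?S. ?F s)" by blast
    qed
  qed
  have fib: "card (?F s) = card (A \<inter> B)" if s: "s \<in> ?S" for s
  proof -
    obtain a0 b0 where a0: "a0 \<in> A" and b0: "b0 \<in> B" and sab: "s = a0 + b0"
      using s unfolding setsum_vec_def by auto
    have a0c: "a0 \<in> carrier_vec d" and b0c: "b0 \<in> carrier_vec d" using a0 b0 AC BC by auto
    have "bij_betw (\<lambda>c. (a0 + c, b0 - c)) (A \<inter> B) (?F s)"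
    proof (rule bij_betw_imageI)
      show "inj_on (\<lambda>c. (a0 + c, b0 - c)) (A \<inter> B)"
      proof (rule inj_onI)
        fix c c' assume c: "c \<in> A \<inter> B" and c': "c' \<in> A \<inter> B"
          and e: "(a0 + c, b0 - c) = (a0 + c', b0 - c')"
        have cc: "c \<in> carrier_vec d" "c' \<in> carrier_vec d" using c c' AC by auto
        from e have "a0 + c = a0 + c'" by simp
        then have "\<forall>i<d. a0 $ i + c $ i = a0 $ i + c' $ i"
        proof (intro allI impI)
          fix i assume i: "i < d" and "a0 + c = a0 + c'"
          then have "(a0 + c) $ i = (a0 + c') $ i" by simp
          then show "a0 $ i + c $ i = a0 $ i + c' $ i" using i cc by simp
        qed
        then show "c = c'" using cc by (simp add: vec_eq_idx)
      qed
      show "(\<lambda>c. (a0 + c, b0 - c)) ` (A \<inter> B) = ?F s"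
      proof
        show "(\<lambda>c. (a0 + c, b0 - c)) ` (A \<inter> B) \<subseteq> ?F s"
        proof
          fix p assume "p \<in> (\<lambda>c. (a0 + c, b0 - c)) ` (A \<inter> B)"
          then obtain c where c: "c \<in> A \<inter> B" and p: "p = (a0 + c, b0 - c)" by blast
          have cc: "c \<in> carrier_vec d" using c AC by auto
          have "a0 + c \<in> A" using sA a0 c unfolding subsp_def by auto
          moreover have "b0 - c \<in> B" using subsp_sub[OF sB b0] c by auto
          moreover have "(a0 + c) + (b0 - c) = s" unfolding sab using cc a0c b0c
            by (intro eq_vecI) auto
          ultimately show "p \<in> ?F s" using p by simp
        qed
        show "?F s \<subseteq> (\<lambda>c. (a0 + c, b0 - c)) ` (A \<inter> B)"
        proof
          fix p assume p: "p \<in> ?F s"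
          obtain a b where pab: "p = (a, b)" by (cases p)
          have a: "a \<in> A" and b: "b \<in> B" and ab: "a + b = a0 + b0" using p pab sab by auto
          have ac: "a \<in> carrier_vec d" and bc: "b \<in> carrier_vec d" using a b AC BC by auto
          have idx: "\<forall>i<d. a $ i + b $ i = a0 $ i + b0 $ i"
          proof (intro allI impI)
            fix i assume i: "i < d"
            have "(a + b) $ i = (a0 + b0) $ i" using ab by simp
            then show "a $ i + b $ i = a0 $ i + b0 $ i" using i bc b0c by simp
          qed
          let ?c = "a - a0"
          have cA: "?c \<in> A" using subsp_sub[OF sA a a0] .
          have "?c = b0 - b"
          proof (rule eq_vecI)
            fix i assume "i < dim_vec (b0 - b)"
            then have i: "i < d" using b0c bc by simp
            have "a $ i + b $ i = a0 $ i + b0 $ i" using idx i by blast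
            then have "a $ i - a0 $ i = b0 $ i - b $ i" by (simp add: algebra_simps)
            then show "?c $ i = (b0 - b) $ i" using i ac bc a0c b0c by simp
          qed (use ac b0c bc a0c in simp)
          then have cB: "?c \<in> B" using subsp_sub[OF sB b0 b] by simp
          have "a = a0 + ?c" using ac a0c by (intro eq_vecI) auto
          moreover have "b = b0 - (b0 - b)" using bc b0c by (intro eq_vecI) auto
          ultimately have "p = (a0 + ?c, b0 - ?c)" using pab \<open>?c = b0 - b\<close> by simp
          then show "p \<in> (\<lambda>c. (a0 + c, b0 - c)) ` (A \<inter> B)" using cA cB by blast
        qed
      qed
    qed
    then show ?thesis by (simp add: bij_betw_same_card)
  qed
  have "card (A \<times> B) = card (\<Union>s\<in>?S. ?F s)" by (simp only: U)
  also have "\<dots> = (\<Sum>s\<in>?S. card (?F s))"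
  proof (rule card_UN_disjoint[OF fS])
    show "\<forall>s\<in>?S. finite (?F s)"
    proof
      fix s show "finite (?F s)" by (rule finite_subset[of _ "A \<times> B"]) (use fA fB in auto)
    qed
    show "\<forall>s\<in>?S. \<forall>s'\<in>?S. s \<noteq> s' \<longrightarrow> ?F s \<inter> ?F s' = {}" by blast
  qed
  also have "\<dots> = card ?S * card (A \<inter> B)" using fib by simp
  finally show ?thesis by (simp add: card_cartesian_product)
qed

lemma vmul_carrier[simp]: "T \<in> carrier_mat d d \<Longrightarrow> vmul x T \<in> carrier_vec d"
  unfolding vmul_def carrier_vec_def by simp

lemma vmul_add: "T \<in> carrier_mat d d \<Longrightarrow> x \<in> carrier_vec d \<Longrightarrow> y \<in> carrier_vec d \<Longrightarrow>
  vmul (x + y) T = vmul x T + vmul y T"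
  unfolding vmul_def by (rule mult_add_distrib_mat_vec) auto

lemma vmul_smult: "(T::'a::field mat) \<in> carrier_mat d d \<Longrightarrow> x \<in> carrier_vec d \<Longrightarrow>
  vmul (c \<cdot>\<^sub>v x) T = c \<cdot>\<^sub>v vmul x T"
  unfolding vmul_def by (rule mult_mat_vec) auto

lemma vmul_zero: "(T::'a::field mat) \<in> carrier_mat d d \<Longrightarrow> vmul (0\<^sub>v d) T = 0\<^sub>v d"
  unfolding vmul_def by (intro eq_vecI) auto

lemma vmul_mult: "A \<in> carrier_mat d d \<Longrightarrow> B \<in> carrier_mat d d \<Longrightarrow> x \<in> carrier_vec d \<Longrightarrow>
  vmul x (A * B) = vmul (vmul x A) B"
  unfolding vmul_def by (simp add: transpose_mult[of A d d B d])

lemma vmul_one: "x \<in> carrier_vec d \<Longrightarrow> vmul x (1\<^sub>m d) = (x::'a::field vec)"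
  unfolding vmul_def by simp

lemma subsp_Vsp: "subsp d (Vsp d n)"
  unfolding subsp_def Vsp_def by auto

lemma subsp_Fsp: "n \<le> d \<Longrightarrow> subsp d (Fsp d n)"
  unfolding subsp_def Fsp_def by auto

lemma subsp_fix: "T \<in> carrier_mat d d \<Longrightarrow> subsp d (fixsp d T)"
  unfolding subsp_def fixsp_def by (auto simp: vmul_add vmul_smult vmul_zero)

lemma subsp_int: "subsp d A \<Longrightarrow> subsp d B \<Longrightarrow> subsp d (A \<inter> B)"
  unfolding subsp_def by auto

lemma subsp_sum: assumes sA: "subsp d A" and sB: "subsp d B" shows "subsp d (setsum_vec A B)"
proof -
  have AC: "A \<subseteq> carrier_vec d" and BC: "B \<subseteq> carrier_vec d" using assms unfolding subsp_def by auto
  have z: "0\<^sub>v d \<in> A" "0\<^sub>v d \<in> B" using assms unfolding subsp_def by auto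
  have addA: "\<And>x y. x \<in> A \<Longrightarrow> y \<in> A \<Longrightarrow> x + y \<in> A" using sA unfolding subsp_def by blast
  have addB: "\<And>x y. x \<in> B \<Longrightarrow> y \<in> B \<Longrightarrow> x + y \<in> B" using sB unfolding subsp_def by blast
  have smA: "\<And>c x. x \<in> A \<Longrightarrow> c \<cdot>\<^sub>v x \<in> A" using sA unfolding subsp_def by blast
  have smB: "\<And>c x. x \<in> B \<Longrightarrow> c \<cdot>\<^sub>v x \<in> B" using sB unfolding subsp_def by blast
  have mem: "\<And>v. v \<in> setsum_vec A B \<longleftrightarrow> (\<exists>a b. v = a + b \<and> a \<in> A \<and> b \<in> B)"
    unfolding setsum_vec_def by blast
  have C: "setsum_vec A B \<subseteq> carrier_vec d"
  proof
    fix v assume "v \<in> setsum_vec A B"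
    then obtain a b where "v = a + b" "a \<in> A" "b \<in> B" using mem by blast
    then show "v \<in> carrier_vec d" using AC BC by (metis add_carrier_vec subsetD)
  qed
  have Z: "0\<^sub>v d \<in> setsum_vec A B"
  proof -
    have "0\<^sub>v d = 0\<^sub>v d + (0\<^sub>v d :: 'a vec)" by simp
    then show ?thesis using mem z by blast
  qed
  have ADD: "x + y \<in> setsum_vec A B" if x: "x \<in> setsum_vec A B" and y: "y \<in> setsum_vec A B" for x y
  proof -
    obtain a b where a: "a \<in> A" and b: "b \<in> B" and xab: "x = a + b" using x mem by blast
    obtain a' b' where a': "a' \<in> A" and b': "b' \<in> B" and yab: "y = a' + b'" using y mem by blast
    have c: "a \<in> carrier_vec d" "b \<in> carrier_vec d" "a' \<in> carrier_vec d" "b' \<in> carrier_vec d"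
      using a b a' b' AC BC by auto
    have "x + y = (a + a') + (b + b')"
    proof (rule eq_vecI)
      fix i assume "i < dim_vec ((a + a') + (b + b'))"
      then have i: "i < d" using c by simp
      show "(x + y) $ i = ((a + a') + (b + b')) $ i" unfolding xab yab using i c by (simp add: ac_simps)
    qed (use c xab yab in simp)
    then show ?thesis using mem addA[OF a a'] addB[OF b b'] by blast
  qed
  have SM: "c \<cdot>\<^sub>v x \<in> setsum_vec A B" if x: "x \<in> setsum_vec A B" for c x
  proof -
    obtain a b where a: "a \<in> A" and b: "b \<in> B" and xab: "x = a + b" using x mem by blast
    have cc: "a \<in> carrier_vec d" "b \<in> carrier_vec d" using a b AC BC by auto
    have "c \<cdot>\<^sub>v x = c \<cdot>\<^sub>v a + c \<cdot>\<^sub>v b" unfolding xab using cc by (simp add: smult_add_distrib_vec)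
    then show ?thesis using mem smA[OF a] smB[OF b] by blast
  qed
  show ?thesis unfolding subsp_def using C Z ADD SM by blast
qed

lemma subsp_img: assumes "subsp d W" "T \<in> carrier_mat d d" shows "subsp d (img W T)"
proof -
  have WC: "W \<subseteq> carrier_vec d" using assms unfolding subsp_def by auto
  show ?thesis unfolding subsp_def img_def
  proof (intro conjI ballI allI)
    show "(\<lambda>x. vmul x T) ` W \<subseteq> carrier_vec d" using assms(2) by auto
    show "0\<^sub>v d \<in> (\<lambda>x. vmul x T) ` W" using assms vmul_zero[OF assms(2)] unfolding subsp_def by (metis image_eqI)
  next
    fix x y assume "x \<in> (\<lambda>x. vmul x T) ` W" "y \<in> (\<lambda>x. vmul x T) ` W"
    then obtain a b where a: "a \<in> W" "x = vmul a T" and b: "b \<in> W" "y = vmul b T" by auto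
    have "x + y = vmul (a + b) T" using a b WC assms(2) by (simp add: vmul_add subsetD)
    moreover have "a + b \<in> W" using assms a b unfolding subsp_def by auto
    ultimately show "x + y \<in> (\<lambda>x. vmul x T) ` W" by blast
  next
    fix c x assume "x \<in> (\<lambda>x. vmul x T) ` W"
    then obtain a where a: "a \<in> W" "x = vmul a T" by auto
    have "c \<cdot>\<^sub>v x = vmul (c \<cdot>\<^sub>v a) T" using a WC assms(2) by (simp add: vmul_smult subsetD)
    moreover have "c \<cdot>\<^sub>v a \<in> W" using assms a unfolding subsp_def by auto
    ultimately show "c \<cdot>\<^sub>v x \<in> (\<lambda>x. vmul x T) ` W" by blast
  qed
qed

lemma prod_if_lt: fixes a b :: nat assumes "n \<le> d" shows "(\<Prod>i<d. if i < n then a else b) = a ^ n * b ^ (d - n)"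
proof -
  have "(\<Prod>i<d. if i < n then a else b) = (\<Prod>i\<in>{..<d} \<inter> {i. i < n}. a) * (\<Prod>i\<in>{..<d} \<inter> - {i. i < n}. b)"
    by (rule prod.If_cases) simp
  moreover have "{..<d} \<inter> {i. i < n} = {..<n}" using assms by auto
  moreover have "{..<d} \<inter> - {i. i < n} = {n..<d}" by auto
  ultimately show ?thesis by simp
qed

lemma card_Vsp: assumes "n \<le> d" shows "card (Vsp d n :: 'a::{field,finite} vec set) = card (UNIV::'a set) ^ n"
proof -
  have "Vsp d n = {x \<in> carrier_vec d. \<forall>i<d. x $ i \<in> (if i < n then UNIV else {0::'a})}"
    unfolding Vsp_def by auto
  then have "card (Vsp d n :: 'a vec set) = (\<Prod>i<d. card (if i < n then UNIV else {0::'a}))"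
    by (simp add: card_vec_constr)
  also have "\<dots> = (\<Prod>i<d. if i < n then card (UNIV::'a set) else 1)"
    by (rule prod.cong) auto
  finally show ?thesis by (simp add: prod_if_lt[OF assms])
qed

lemma card_Fsp: assumes "n \<le> d" shows "card (Fsp d n :: 'a::{field,finite} vec set) = card (UNIV::'a set) ^ (d - n)"
proof -
  have "Fsp d n = {x \<in> carrier_vec d. \<forall>i<d. x $ i \<in> (if i < n then {0::'a} else UNIV)}"
    unfolding Fsp_def using assms by auto
  then have "card (Fsp d n :: 'a vec set) = (\<Prod>i<d. card (if i < n then {0::'a} else UNIV))"
    by (simp add: card_vec_constr)
  also have "\<dots> = (\<Prod>i<d. if i < n then 1 else card (UNIV::'a set))"
    by (rule prod.cong) auto
  finally show ?thesis by (simp add: prod_if_lt[OF assms])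
qed

lemma card_carrier_vec: "card (carrier_vec d :: 'a::{field,finite} vec set) = card (UNIV::'a set) ^ d"
proof -
  have "Vsp d d = (carrier_vec d :: 'a vec set)" unfolding Vsp_def by auto
  then show ?thesis using card_Vsp[of d d, where 'a='a] by simp
qed

lemma card_le_carrier: "W \<subseteq> carrier_vec d \<Longrightarrow> card (W :: 'a::{field,finite} vec set) \<le> card (UNIV::'a set) ^ d"
  using card_mono[of "carrier_vec d" W] card_carrier_vec[where 'a='a] by simp

definition pi1 :: "nat \<Rightarrow> nat \<Rightarrow> nat" where
  "pi1 n j = (if j < n then (if j = n - 1 then 0 else j + 1) else j)"
definition pi2 :: "nat \<Rightarrow> nat \<Rightarrow> nat" where
  "pi2 n j = (if j = 0 then 0 else if j = n - 1 then 1 else if j < n then j + 1 else j)"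

lemma z1_carrier: "z1 n \<in> carrier_mat n n"
  unfolding z1_def perm_mat_def Let_def by auto
lemma z2_carrier: "z2 n \<in> carrier_mat n n"
  unfolding z2_def perm_mat_def Let_def by auto

lemma diag_block_carrier: assumes "z \<in> carrier_mat n n" "n \<le> d" shows "diag_block d z \<in> carrier_mat d d"
proof -
  have r: "dim_row z = n" using assms by auto
  have "four_block_mat z (0\<^sub>m n (d - n)) (0\<^sub>m (d - n) n) (1\<^sub>m (d - n)) \<in> carrier_mat (n + (d - n)) (n + (d - n))"
    by (rule four_block_carrier_mat[OF assms(1)]) simp
  then show ?thesis unfolding diag_block_def r using assms(2) by simp
qed

lemma diag_block_idx: assumes "z \<in> carrier_mat n n" "n \<le> d" "i < d" "j < d"
  shows "diag_block d z $$ (i, j) = (if i < n \<and> j < n then z $$ (i, j) else if i < n \<or> j < n then 0 else if i = j then 1 else 0)"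
proof -
  have r: "dim_row z = n" "dim_col z = n" using assms by auto
  have "four_block_mat z (0\<^sub>m n (d - n)) (0\<^sub>m (d - n) n) (1\<^sub>m (d - n)) $$ (i, j) =
     (if i < n then if j < n then z $$ (i,j) else (0\<^sub>m n (d - n)) $$ (i,j - n)
      else if j < n then (0\<^sub>m (d - n) n) $$ (i - n, j) else (1\<^sub>m (d - n)) $$ (i - n, j - n))"
    using index_mat_four_block(1)[of i z "1\<^sub>m (d - n)" j "0\<^sub>m n (d - n)" "0\<^sub>m (d - n) n"] r assms by simp
  also have "\<dots> = (if i < n \<and> j < n then z $$ (i, j) else if i < n \<or> j < n then 0 else if i = j then 1 else 0)"
    using assms by auto
  finally show ?thesis unfolding diag_block_def r .
qed

lemma sig1_pi1: assumes "3 \<le> n" "i < n" "j < n" shows "(j = sigma1 n i) \<longleftrightarrow> (i = pi1 n j)"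
proof (cases "i = 0")
  case True then show ?thesis using assms unfolding sigma1_def pi1_def by auto
next
  case False then show ?thesis using assms unfolding sigma1_def pi1_def by auto
qed

lemma z1_idx: assumes "odd n" "3 \<le> n" "i < n" "j < n"
  shows "(z1 n :: 'a::field mat) $$ (i, j) = (if i = pi1 n j then 1 else 0)"
proof -
  have "(z1 n :: 'a mat) = perm_mat n (sigma1 n)" using assms(1) by (simp add: z1_def Let_def)
  then have "(z1 n :: 'a mat) $$ (i, j) = perm_mat n (sigma1 n) $$ (i, j)" by simp
  also have "\<dots> = (if j = sigma1 n i then 1 else 0)" using assms by (simp add: perm_mat_def)
  finally have "(z1 n :: 'a mat) $$ (i, j) = (if j = sigma1 n i then 1 else 0)" .
  then show ?thesis using sig1_pi1[OF assms(2-4)] by simp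
qed

lemma sig2_pi2a: assumes "3 \<le> n" "i < n" "j < n" "j \<noteq> n - 1"
  shows "(j = sigma2 n i) \<longleftrightarrow> (i = pi2 n j)"
proof (cases "i = 0")
  case True then show ?thesis using assms unfolding sigma2_def pi2_def by auto
next
  case False
  show ?thesis
  proof (cases "i = 1")
    case True then show ?thesis using assms unfolding sigma2_def pi2_def by auto
  next
    case False
    then show ?thesis using assms \<open>i \<noteq> 0\<close> unfolding sigma2_def pi2_def by auto
  qed
qed

lemma sig2_pi2b: assumes "3 \<le> n" "i < n" "i \<noteq> 1"
  shows "n - 1 \<noteq> sigma2 n i" "pi2 n (n - 1) = 1"
  using assms unfolding sigma2_def pi2_def by auto

lemma z2_idx: assumes "odd n" "3 \<le> n" "i < n" "j < n"
  shows "(z2 n :: 'a::field mat) $$ (i, j) = (if i = pi2 n j then (if j = n - 1 then -1 else 1) else 0)"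
proof -
  have "(z2 n :: 'a mat) $$ (i, j) = (if i = 1 \<and> j = n - 1 then -1 else perm_mat n (sigma2 n) $$ (i, j))"
    using assms by (simp add: z2_def Let_def)
  also have "(perm_mat n (sigma2 n) :: 'a mat) $$ (i, j) = (if j = sigma2 n i then 1 else 0)"
    using assms by (simp add: perm_mat_def)
  finally have e: "(z2 n :: 'a mat) $$ (i, j) = (if i = 1 \<and> j = n - 1 then -1 else (if j = sigma2 n i then 1 else 0))" .
  show ?thesis
  proof (cases "j = n - 1")
    case True
    have p: "pi2 n (n - 1) = 1" unfolding pi2_def using assms by auto
    show ?thesis
    proof (cases "i = 1")
      case True then show ?thesis using e p \<open>j = n - 1\<close> by simp
    next
      case False then show ?thesis using e p \<open>j = n - 1\<close> sig2_pi2b[OF assms(2,3) False] by simp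
    qed
  next
    case False
    then show ?thesis using e sig2_pi2a[OF assms(2-4) False] by simp
  qed
qed

lemma t_gen_idx: assumes "z \<in> carrier_mat n n" "n \<le> d" "i < d" "j < d"
  and zi: "\<And>i j. i < n \<Longrightarrow> j < n \<Longrightarrow> z $$ (i, j) = (if i = p j then c j else 0)"
  and pl: "\<And>j. j < n \<Longrightarrow> p j < n" and pg: "\<And>j. \<not> j < n \<Longrightarrow> p j = j \<and> c j = 1"
  shows "diag_block d z $$ (i, j) = (if i = p j then c j else 0)"
proof -
  have D: "diag_block d z $$ (i, j) = (if i < n \<and> j < n then z $$ (i, j) else if i < n \<or> j < n then 0 else if i = j then 1 else 0)"
    by (rule diag_block_idx[OF assms(1-4)])
  show ?thesis
  proof (cases "j < n")
    case True
    note jn = True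
    show ?thesis
    proof (cases "i < n")
      case True
      then show ?thesis using D jn zi[OF True jn] by simp
    next
      case False
      have "i \<noteq> p j" using pl[OF jn] False by auto
      then show ?thesis using D jn False by simp
    qed
  next
    case False
    note jn = False
    have pj: "p j = j" "c j = 1" using pg[OF False] by auto
    show ?thesis
    proof (cases "i < n")
      case True
      then have "i \<noteq> j" using jn by auto
      then show ?thesis using D jn True pj by simp
    next
      case False
      then show ?thesis using D jn pj by simp
    qed
  qed
qed

lemma t1_idx: assumes "odd n" "3 \<le> n" "n \<le> d" "i < d" "j < d"
  shows "diag_block d (z1 n :: 'a::field mat) $$ (i, j) = (if i = pi1 n j then (\<lambda>_. 1) j else 0)"
proof (rule t_gen_idx[OF z1_carrier assms(3-5)])
  fix i j assume "i < n" "j < n"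
  then show "(z1 n :: 'a mat) $$ (i, j) = (if i = pi1 n j then 1 else 0)" by (rule z1_idx[OF assms(1,2)])
qed (use assms in \<open>auto simp: pi1_def\<close>)

lemma t2_idx: assumes "odd n" "3 \<le> n" "n \<le> d" "i < d" "j < d"
  shows "diag_block d (z2 n :: 'a::field mat) $$ (i, j) = (if i = pi2 n j then (\<lambda>j. if j = n - 1 then -1 else 1) j else 0)"
proof (rule t_gen_idx[OF z2_carrier assms(3-5)])
  fix i j assume "i < n" "j < n"
  then show "(z2 n :: 'a mat) $$ (i, j) = (if i = pi2 n j then (if j = n - 1 then -1 else 1) else 0)" by (rule z2_idx[OF assms(1,2)])
qed (use assms in \<open>auto simp: pi2_def\<close>)

lemma vmul_idx: assumes "T \<in> carrier_mat d d" "x \<in> carrier_vec d" "j < d"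
  shows "vmul x T $ j = (\<Sum>i<d. T $$ (i, j) * x $ i)"
proof -
  have "vmul x T $ j = row (transpose_mat T) j \<bullet> x" unfolding vmul_def using assms by simp
  also have "\<dots> = col T j \<bullet> x" using assms by simp
  also have "\<dots> = (\<Sum>i\<in>{0..<d}. col T j $ i * x $ i)" unfolding scalar_prod_def using assms by simp
  also have "\<dots> = (\<Sum>i<d. T $$ (i, j) * x $ i)" using assms by (intro sum.cong) auto
  finally show ?thesis .
qed

lemma vmul_perm_idx: assumes "T \<in> carrier_mat d d" "x \<in> carrier_vec d" "j < d"
  and e: "\<And>i. i < d \<Longrightarrow> T $$ (i, j) = (if i = p then c else 0)" and p: "p < d"
  shows "vmul x T $ j = c * x $ p"
proof -
  have "vmul x T $ j = (\<Sum>i<d. (if i = p then c * x $ i else 0))"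
    unfolding vmul_idx[OF assms(1-3)] by (intro sum.cong) (auto simp: e)
  also have "\<dots> = c * x $ p" using p by simp
  finally show ?thesis .
qed

lemma card_zero_block: assumes "lo \<le> hi" "hi \<le> d"
  shows "card {x \<in> carrier_vec d. \<forall>i<d. x $ i \<in> (if lo \<le> i \<and> i < hi then {0} else (UNIV :: 'a::{finite,zero} set))}
     = card (UNIV::'a set) ^ (d - (hi - lo))"
proof -
  have "card {x \<in> carrier_vec d. \<forall>i<d. x $ i \<in> (if lo \<le> i \<and> i < hi then {0} else (UNIV :: 'a set))}
     = (\<Prod>i<d. card (if lo \<le> i \<and> i < hi then {0} else (UNIV :: 'a set)))" by (rule card_vec_constr)
  also have "\<dots> = (\<Prod>i<d. if lo \<le> i \<and> i < hi then 1 else card (UNIV :: 'a set))" by (intro prod.cong) auto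
  also have "\<dots> = (\<Prod>i\<in>{..<d} \<inter> {i. lo \<le> i \<and> i < hi}. 1) * (\<Prod>i\<in>{..<d} \<inter> - {i. lo \<le> i \<and> i < hi}. card (UNIV :: 'a set))"
    by (rule prod.If_cases) simp
  also have "\<dots> = card (UNIV :: 'a set) ^ card ({..<d} \<inter> - {i. lo \<le> i \<and> i < hi})" by simp
  also have "{..<d} \<inter> - {i. lo \<le> i \<and> i < hi} = {..<lo} \<union> {hi..<d}" using assms by auto
  also have "card ({..<lo} \<union> {hi..<d}) = d - (hi - lo)" using assms by (subst card_Un_disjoint) auto
  finally show ?thesis .
qed

abbreviation zb :: "nat \<Rightarrow> nat \<Rightarrow> nat \<Rightarrow> 'a::field vec set" where
  "zb d lo hi \<equiv> {x \<in> carrier_vec d. \<forall>i<d. x $ i \<in> (if lo \<le> i \<and> i < hi then {0} else UNIV)}"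

lemma t1_carrier: "n \<le> d \<Longrightarrow> diag_block d (z1 n) \<in> carrier_mat d d"
  by (rule diag_block_carrier[OF z1_carrier])
lemma t2_carrier: "n \<le> d \<Longrightarrow> diag_block d (z2 n) \<in> carrier_mat d d"
  by (rule diag_block_carrier[OF z2_carrier])

lemma fix_t1: assumes "odd n" "3 \<le> n" "n \<le> d"
  shows "fixsp d (diag_block d (z1 n) :: 'a::field mat) = {x \<in> carrier_vec d. \<forall>i\<in>{1..<n}. x $ i = x $ 0}"
proof -
  let ?t = "diag_block d (z1 n) :: 'a mat"
  have tc: "?t \<in> carrier_mat d d" using t1_carrier[OF assms(3)] .
  have vi: "vmul x ?t $ j = x $ pi1 n j" if x: "x \<in> carrier_vec d" and j: "j < d" for x j
  proof -
    have "vmul x ?t $ j = 1 * x $ pi1 n j"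
    proof (rule vmul_perm_idx[OF tc x j])
      fix i assume "i < d"
      then show "?t $$ (i, j) = (if i = pi1 n j then 1 else 0)" using t1_idx[OF assms \<open>i < d\<close> j] by simp
    qed (use j assms in \<open>auto simp: pi1_def\<close>)
    then show ?thesis by simp
  qed
  show ?thesis
  proof (rule Set.set_eqI, rule iffI)
    fix x :: "'a vec" assume "x \<in> fixsp d ?t"
    then have x: "x \<in> carrier_vec d" and fx: "vmul x ?t = x" unfolding fixsp_def by auto
    have h: "x $ pi1 n j = x $ j" if "j < d" for j using vi[OF x that] fx by simp
    have A1: "x $ i = x $ 0" if "i < n" for i
      using that
    proof (induction i)
      case 0 then show ?case by simp
    next
      case (Suc i)
      have "pi1 n i = Suc i" unfolding pi1_def using Suc.prems by auto
      moreover have "i < d" using Suc.prems assms by simp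
      ultimately have "x $ Suc i = x $ i" using h[of i] by simp
      moreover have "x $ i = x $ 0" using Suc.IH Suc.prems by simp
      ultimately show ?case by (rule trans)
    qed
    have "\<forall>i\<in>{1..<n}. x $ i = x $ 0"
    proof
      fix i assume "i \<in> {1..<n}"
      then have "i < n" by simp
      then show "x $ i = x $ 0" by (rule A1)
    qed
    then show "x \<in> {x \<in> carrier_vec d. \<forall>i\<in>{1..<n}. x $ i = x $ 0}" using x by blast
  next
    fix x :: "'a vec" assume "x \<in> {x \<in> carrier_vec d. \<forall>i\<in>{1..<n}. x $ i = x $ 0}"
    then have x: "x \<in> carrier_vec d" and a0: "\<forall>i\<in>{1..<n}. x $ i = x $ 0" by blast+
    have a: "x $ i = x $ 0" if "i < n" for i using a0 that by (cases "i = 0") auto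
    have "vmul x ?t = x"
    proof (rule eq_vecI)
      fix j assume "j < dim_vec x"
      then have j: "j < d" using x by simp
      show "vmul x ?t $ j = x $ j"
      proof (cases "j < n")
        case True
        then have "pi1 n j < n" unfolding pi1_def by auto
        then have e1: "x $ pi1 n j = x $ 0" by (rule a)
        have e2: "x $ j = x $ 0" using True by (rule a)
        show ?thesis using vi[OF x j] e1 e2 by (simp only:)
      next
        case False
        then show ?thesis using vi[OF x j] unfolding pi1_def by simp
      qed
    qed (use x tc in simp)
    then show "x \<in> fixsp d ?t" unfolding fixsp_def using x by simp
  qed
qed

lemma card_fix_t1: assumes "odd n" "3 \<le> n" "n \<le> d"
  shows "card (fixsp d (diag_block d (z1 n) :: 'a::{field,finite} mat)) = card (UNIV::'a set) ^ (d - (n - 1))"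
proof -
  let ?A = "{x \<in> carrier_vec d. \<forall>i\<in>{1..<n}. x $ i = x $ 0} :: 'a vec set"
  let ?f = "\<lambda>x::'a vec. vec d (\<lambda>i. if 1 \<le> i \<and> i < n then 0 else x $ i)"
  let ?g = "\<lambda>y::'a vec. vec d (\<lambda>i. if i < n then y $ 0 else y $ i)"
  have d0: "0 < d" using assms by auto
  have "bij_betw ?f ?A (zb d 1 n)"
  proof (rule bij_betw_byWitness[where f'="?g"])
    show "\<forall>a\<in>?A. ?g (?f a) = a"
    proof
      fix a assume a: "a \<in> ?A"
      show "?g (?f a) = a"
      proof (rule eq_vecI)
        fix i assume "i < dim_vec a"
        then have i: "i < d" using a by auto
        show "?g (?f a) $ i = a $ i"
        proof (cases "i < n")
          case True
          show ?thesis
          proof (cases "i = 0")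
            case True then show ?thesis using i d0 by simp
          next
            case False
            then have "a $ i = a $ 0" using a \<open>i < n\<close> by auto
            then show ?thesis using i d0 \<open>i < n\<close> by simp
          qed
        next
          case False then show ?thesis using i d0 by simp
        qed
      qed (use a in auto)
    qed
    show "\<forall>a\<in>zb d 1 n. ?f (?g a) = a"
    proof
      fix a assume a: "a \<in> (zb d 1 n :: 'a vec set)"
      show "?f (?g a) = a"
      proof (rule eq_vecI)
        fix i assume "i < dim_vec a"
        then have i: "i < d" using a by auto
        show "?f (?g a) $ i = a $ i"
        proof (cases "1 \<le> i \<and> i < n")
          case True
          then have "a $ i \<in> {0}" using a i by auto
          then show ?thesis using True i by simp
        next
          case False
          show ?thesis
          proof (cases "i < n")
            case True
            then have "i = 0" using False by simp
            then show ?thesis using i d0 by simp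
          next
            case False
            then show ?thesis using i d0 by simp
          qed
        qed
      qed (use a in auto)
    qed
    show "?f ` ?A \<subseteq> zb d 1 n" by auto
    show "?g ` zb d 1 n \<subseteq> ?A" using d0 assms by auto
  qed
  then have "card ?A = card (zb d 1 n :: 'a vec set)" by (rule bij_betw_same_card)
  also have "\<dots> = card (UNIV::'a set) ^ (d - (n - 1))" using card_zero_block[of 1 n d] assms by simp
  finally show ?thesis using fix_t1[OF assms, where 'a='a] by simp
qed

lemma two_ne_zero_char: assumes "CHAR('a::field) \<noteq> 2" shows "(2::'a) \<noteq> 0"
proof
  assume "(2::'a) = 0"
  then have "of_nat 2 = (0::'a)" by simp
  then have dv: "CHAR('a) dvd 2" by (simp only: of_nat_eq_0_iff_char_dvd)
  then have "CHAR('a) \<le> 2" by (rule dvd_imp_le) simp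
  moreover have "CHAR('a) \<noteq> 0" using dv by (metis dvd_0_left_iff zero_neq_numeral)
  moreover have "CHAR('a) \<noteq> Suc 0" by simp
  ultimately show False using assms by linarith
qed

lemma fix_t2: assumes "odd n" "3 \<le> n" "n \<le> d" and ch: "CHAR('a::field) \<noteq> 2"
  shows "fixsp d (diag_block d (z2 n) :: 'a mat) = zb d 1 n"
proof -
  let ?t = "diag_block d (z2 n) :: 'a mat"
  let ?c = "\<lambda>j. if j = n - 1 then -1 else (1::'a)"
  have tc: "?t \<in> carrier_mat d d" using t2_carrier[OF assms(3)] .
  have vi: "vmul x ?t $ j = ?c j * x $ pi2 n j" if x: "x \<in> carrier_vec d" and j: "j < d" for x j
  proof (rule vmul_perm_idx[OF tc x j])
    fix i assume "i < d"
    then show "?t $$ (i, j) = (if i = pi2 n j then ?c j else 0)" using t2_idx[OF assms(1-3) \<open>i < d\<close> j] by simp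
  qed (use j assms in \<open>auto simp: pi2_def\<close>)
  have p0: "pi2 n 0 = 0" unfolding pi2_def by simp
  have pl: "pi2 n (n - 1) = 1" unfolding pi2_def using assms by simp
  have pm: "pi2 n j = Suc j" if "1 \<le> j" "Suc j < n" for j unfolding pi2_def using that by auto
  have pr: "1 \<le> pi2 n j \<and> pi2 n j < n" if "1 \<le> j" "j < n" for j unfolding pi2_def using that assms by auto
  have pg: "pi2 n j = j" if "\<not> j < n" for j unfolding pi2_def using that assms by auto
  show ?thesis
  proof (rule Set.set_eqI, rule iffI)
    fix x :: "'a vec" assume "x \<in> fixsp d ?t"
    then have x: "x \<in> carrier_vec d" and fx: "vmul x ?t = x" unfolding fixsp_def by auto
    have h: "?c j * x $ pi2 n j = x $ j" if "j < d" for j using vi[OF x that] fx by simp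
    have B: "x $ i = x $ 1" if "1 \<le> i" "i < n" for i
      using that
    proof (induction i)
      case 0 then show ?case by simp
    next
      case (Suc i)
      show ?case
      proof (cases "i = 0")
        case True then show ?thesis by simp
      next
        case False
        then have i1: "1 \<le> i" by simp
        have "i \<noteq> n - 1" using Suc.prems by simp
        moreover have "i < d" using Suc.prems assms by simp
        ultimately have "x $ Suc i = x $ i" using h[of i] pm[OF i1 Suc.prems(2)] by simp
        moreover have "x $ i = x $ 1" using Suc.IH i1 Suc.prems by simp
        ultimately show ?thesis by (rule trans)
      qed
    qed
    have "-(x $ 1) = x $ (n - 1)" using h[of "n - 1"] pl assms by simp
    also have "\<dots> = x $ 1" using B[of "n - 1"] assms by simp
    finally have e: "-(x $ 1) = x $ 1" .
    have "x $ 1 + x $ 1 = x $ 1 + (-(x $ 1))" by (simp only: e)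
    also have "\<dots> = 0" by simp
    finally have "x $ 1 + x $ 1 = 0" .
    then have "2 * x $ 1 = 0" by (simp only: mult_2)
    then have x1: "x $ 1 = 0" using two_ne_zero_char[OF ch] by simp
    have "\<forall>i<d. x $ i \<in> (if 1 \<le> i \<and> i < n then {0} else UNIV)"
    proof (intro allI impI)
      fix i assume "i < d"
      show "x $ i \<in> (if 1 \<le> i \<and> i < n then {0} else UNIV)"
      proof (cases "1 \<le> i \<and> i < n")
        case True then show ?thesis using B[of i] x1 by simp
      next
        case False then show ?thesis by auto
      qed
    qed
    then show "x \<in> zb d 1 n" using x by blast
  next
    fix x :: "'a vec" assume xz: "x \<in> zb d 1 n"
    then have x: "x \<in> carrier_vec d" by blast
    have z: "x $ i = 0" if "1 \<le> i" "i < n" for i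
    proof -
      have "i < d" using that assms by simp
      then have "x $ i \<in> (if 1 \<le> i \<and> i < n then {0} else UNIV)" using xz by blast
      then show ?thesis using that by simp
    qed
    have "vmul x ?t = x"
    proof (rule eq_vecI)
      fix j assume "j < dim_vec x"
      then have j: "j < d" using x by simp
      show "vmul x ?t $ j = x $ j"
      proof (cases "j = 0")
        case True
        then show ?thesis using vi[OF x j] p0 assms by simp
      next
        case False
        show ?thesis
        proof (cases "j < n")
          case True
          have "x $ pi2 n j = 0" using pr[of j] False True by (intro z) auto
          moreover have "x $ j = 0" using False True by (intro z) auto
          ultimately show ?thesis using vi[OF x j] by simp
        next
          case False
          then have "j \<noteq> n - 1" using assms by simp
          then show ?thesis using vi[OF x j] pg[OF False] by simp
        qed
      qed
    qed (use x tc in simp)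
    then show "x \<in> fixsp d ?t" unfolding fixsp_def using x by simp
  qed
qed

lemma card_fix_t2: assumes "odd n" "3 \<le> n" "n \<le> d" and ch: "CHAR('a::{field,finite}) \<noteq> 2"
  shows "card (fixsp d (diag_block d (z2 n) :: 'a mat)) = card (UNIV::'a set) ^ (d - (n - 1))"
  using fix_t2[OF assms] card_zero_block[of 1 n d, where 'a='a] assms by simp

lemma elem_carrier: "elem_mat d i j l \<in> carrier_mat d d"
  unfolding elem_mat_def by simp

lemma fix_t0: assumes "2 \<le> d"
  shows "fixsp d (elem_mat d 0 1 1 :: 'a::field mat) = zb d 0 1"
proof -
  let ?t = "elem_mat d 0 1 1 :: 'a mat"
  have tc: "?t \<in> carrier_mat d d" by (rule elem_carrier)
  have vi: "vmul x ?t $ j = x $ j + (if j = 1 then x $ 0 else 0)" if x: "x \<in> carrier_vec d" and j: "j < d" for x j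
  proof -
    have "vmul x ?t $ j = (\<Sum>i<d. ?t $$ (i, j) * x $ i)" by (rule vmul_idx[OF tc x j])
    also have "\<dots> = (\<Sum>i<d. (if i = j then x $ i else 0) + (if i = 0 then (if j = 1 then x $ i else 0) else 0))"
      by (intro sum.cong) (use j in \<open>auto simp: elem_mat_def\<close>)
    also have "\<dots> = x $ j + (if j = 1 then x $ 0 else 0)"
      using j assms by (simp add: sum.distrib)
    finally show ?thesis .
  qed
  show ?thesis
  proof (rule Set.set_eqI, rule iffI)
    fix x :: "'a vec" assume "x \<in> fixsp d ?t"
    then have x: "x \<in> carrier_vec d" and fx: "vmul x ?t = x" unfolding fixsp_def by auto
    have "x $ 1 + x $ 0 = x $ 1" using vi[OF x, of 1] fx assms by simp
    then have "x $ 0 = 0" by simp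
    then show "x \<in> zb d 0 1" using x by auto
  next
    fix x :: "'a vec" assume xz: "x \<in> zb d 0 1"
    then have x: "x \<in> carrier_vec d" by blast
    have h0: "\<forall>i<d. x $ i \<in> (if 0 \<le> i \<and> i < 1 then {0} else UNIV)" using xz by blast
    have "0 < d" using assms by simp
    from h0[rule_format, OF this] have x0: "x $ 0 = 0" by simp
    have "vmul x ?t = x"
      by (rule eq_vecI) (use x x0 vi[OF x] tc in auto)
    then show "x \<in> fixsp d ?t" unfolding fixsp_def using x by simp
  qed
qed

lemma card_fix_t0: assumes "2 \<le> d"
  shows "card (fixsp d (elem_mat d 0 1 1 :: 'a::{field,finite} mat)) = card (UNIV::'a set) ^ (d - 1)"
  using fix_t0[OF assms, where 'a='a] card_zero_block[of 0 1 d, where 'a='a] assms by simp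

lemma card_fix_conj:
  assumes B: "B \<in> carrier_mat d d" and t: "t \<in> carrier_mat d d" and E: "E \<in> carrier_mat d d"
    and EB: "E * B = 1\<^sub>m d" and BE: "B * E = 1\<^sub>m d"
  shows "card (fixsp d (B * t * E :: 'a::field mat)) = card (fixsp d t)"
proof -
  have Bt: "B * t \<in> carrier_mat d d" using B t by simp
  have VT: "vmul x (B * t * E) = vmul (vmul (vmul x B) t) E" if "x \<in> carrier_vec d" for x
    using vmul_mult[OF Bt E that] vmul_mult[OF B t that] by simp
  have BEx: "vmul (vmul x B) E = x" if "x \<in> carrier_vec d" for x
    using vmul_mult[OF B E that] BE vmul_one[OF that] by simp
  have EBx: "vmul (vmul x E) B = x" if "x \<in> carrier_vec d" for x
    using vmul_mult[OF E B that] EB vmul_one[OF that] by simp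
  have "bij_betw (\<lambda>x. vmul x B) (fixsp d (B * t * E)) (fixsp d t)"
  proof (rule bij_betw_byWitness[where f'="\<lambda>y. vmul y E"])
    show "\<forall>a\<in>fixsp d (B * t * E). vmul (vmul a B) E = a" unfolding fixsp_def using BEx by auto
    show "\<forall>a\<in>fixsp d t. vmul (vmul a E) B = a" unfolding fixsp_def using EBx by auto
    show "(\<lambda>x. vmul x B) ` fixsp d (B * t * E) \<subseteq> fixsp d t"
    proof
      fix y assume "y \<in> (\<lambda>x. vmul x B) ` fixsp d (B * t * E)"
      then obtain x where x: "x \<in> carrier_vec d" and fx: "vmul x (B * t * E) = x" and y: "y = vmul x B"
        unfolding fixsp_def by auto
      have yc: "y \<in> carrier_vec d" using y B by simp
      have "vmul (vmul y t) E = x" using VT[OF x] fx y by simp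
      then have "vmul (vmul (vmul y t) E) B = vmul x B" by simp
      then have "vmul y t = y" using EBx[of "vmul y t"] t yc y by simp
      then show "y \<in> fixsp d t" unfolding fixsp_def using yc by simp
    qed
    show "(\<lambda>y. vmul y E) ` fixsp d t \<subseteq> fixsp d (B * t * E)"
    proof
      fix x assume "x \<in> (\<lambda>y. vmul y E) ` fixsp d t"
      then obtain y where y: "y \<in> carrier_vec d" and fy: "vmul y t = y" and x: "x = vmul y E"
        unfolding fixsp_def by auto
      have xc: "x \<in> carrier_vec d" using x E by simp
      have "vmul x (B * t * E) = vmul (vmul (vmul x B) t) E" by (rule VT[OF xc])
      also have "vmul x B = y" using x EBx[OF y] by simp
      finally have "vmul x (B * t * E) = x" using fy x by simp
      then show "x \<in> fixsp d (B * t * E)" unfolding fixsp_def using xc by simp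
    qed
  qed
  then show ?thesis by (rule bij_betw_same_card)
qed

lemma tmat_carrier: assumes "n \<le> d" shows "tmat d n \<in> carrier_mat d d"
  unfolding tmat_def using elem_carrier t1_carrier[OF assms] t2_carrier[OF assms] by auto

lemma card_fix_tmat:
  assumes "2 \<le> n" "n < d" "n = 2 \<or> odd n"
  shows "card (fixsp d (tmat d n :: 'a::{field,finite} mat)) = card (UNIV::'a set) ^ (d - n + 1)"
proof (cases "n = 2")
  case True
  then have "tmat d n = (elem_mat d 0 1 1 :: 'a mat)" unfolding tmat_def by simp
  then have c: "card (fixsp d (tmat d n :: 'a mat)) = card (UNIV::'a set) ^ (d - 1)"
    using card_fix_t0[of d, where 'a='a] assms True by simp
  have e: "d - n + 1 = d - 1" using assms True by simp
  show ?thesis using c by (simp only: e)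
next
  case False
  then have o: "odd n" and n3: "3 \<le> n" using assms by auto
  have e: "d - (n - 1) = d - n + 1" using assms by simp
  show ?thesis
  proof (cases "CHAR('a) = 2")
    case True
    then have "tmat d n = (diag_block d (z1 n) :: 'a mat)" unfolding tmat_def using False by simp
    then show ?thesis using card_fix_t1[OF o n3, of d, where 'a='a] assms e by simp
  next
    case ch: False
    then have "tmat d n = (diag_block d (z2 n) :: 'a mat)" unfolding tmat_def using False by simp
    then show ?thesis using card_fix_t2[OF o n3 _ ch, of d] assms e by simp
  qed
qed

lemma subdim_eq: assumes "subsp d W" "card W = card (UNIV::'a set) ^ k"
  shows "subdim d (W :: 'a::{field,finite} vec set) = k"
proof -
  have q: "1 < card (UNIV::'a set)"
  proof -
    have "{0::'a, 1} \<subseteq> UNIV" by simp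
    then have "card {0::'a, 1} \<le> card (UNIV::'a set)" by (rule card_mono[OF finite_UNIV])
    then show ?thesis by simp
  qed
  have "card (UNIV::'a set) ^ subdim d W = card (UNIV::'a set) ^ k" using card_subsp[OF assms(1)] assms(2) by simp
  then show ?thesis using q by (simp add: power_inject_exp)
qed

lemma q_gt1: "1 < card (UNIV::'a::{field,finite} set)"
proof -
  have "{0::'a, 1} \<subseteq> UNIV" by simp
  then have "card {0::'a, 1} \<le> card (UNIV::'a set)" by (rule card_mono[OF finite_UNIV])
  then show ?thesis by simp
qed

theorem lemma7p7:
  fixes n d :: nat and E T :: "'a::{field,finite} mat"
  assumes "2 \<le> n" and "n < d" and "n = 2 \<or> odd n"
    and "E \<in> carrier_mat d d" and "det E = 1"
    and "T = the (mat_inverse E) * tmat d n * E"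
    and "weak_doubling d n T"
  shows "subdim d (Vsp d n \<inter> fixsp d T) \<ge> 1 \<and>
           (nprime n d < d \<longrightarrow> subdim d (Vsp d n \<inter> fixsp d T) = 1) \<and>
         (nprime n d < d \<longrightarrow> subdim d (Fsp d n \<inter> fixsp d T) = d - nprime n d)"
proof -
  let ?q = "card (UNIV::'a set)"
  have q1: "1 < ?q" by (rule q_gt1)
  have Ec: "E \<in> carrier_mat d d" by fact
  have "E \<in> Units (ring_mat TYPE('a) d ())"
    by (rule det_non_zero_imp_unit[OF Ec]) (use assms(5) in simp)
  then have "mat_inverse E \<noteq> None" using mat_inverse(1)[OF Ec, where b="()"] by blast
  then obtain B where mi: "mat_inverse E = Some B" by auto
  from mat_inverse(2)[OF Ec mi] have EB: "E * B = 1\<^sub>m d" and BE: "B * E = 1\<^sub>m d" and Bc: "B \<in> carrier_mat d d"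
    by auto
  let ?t = "tmat d n :: 'a mat"
  have tc: "?t \<in> carrier_mat d d" using assms(2) by (intro tmat_carrier) simp
  have TB: "T = B * ?t * E" using assms(6) mi by simp
  have Tc: "T \<in> carrier_mat d d" unfolding TB using Bc tc Ec by simp
  have cX: "card (fixsp d T) = ?q ^ (d - n + 1)"
    unfolding TB card_fix_conj[OF Bc tc Ec EB BE] using card_fix_tmat[OF assms(1-3)] by simp
  let ?V = "Vsp d n :: 'a vec set"
  let ?F = "Fsp d n :: 'a vec set"
  let ?X = "fixsp d T"
  have sV: "subsp d ?V" by (rule subsp_Vsp)
  have sF: "subsp d ?F" using assms(2) by (intro subsp_Fsp) simp
  have sX: "subsp d ?X" by (rule subsp_fix[OF Tc])
  have cV: "card ?V = ?q ^ n" using assms(2) by (intro card_Vsp) simp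
  have cF: "card ?F = ?q ^ (d - n)" using assms(2) by (intro card_Fsp) simp
  have fV: "finite ?V" by (rule finite_subset[of _ "carrier_vec d"]) (auto simp: Vsp_def)
  have P1: "subdim d (?V \<inter> ?X) \<ge> 1"
  proof (rule ccontr)
    assume "\<not> 1 \<le> subdim d (?V \<inter> ?X)"
    then have k0: "subdim d (?V \<inter> ?X) = 0" by simp
    have "card (?V \<inter> ?X) = ?q ^ subdim d (?V \<inter> ?X)" by (rule card_subsp[OF subsp_int[OF sV sX]])
    then have c1: "card (?V \<inter> ?X) = 1" using k0 by simp
    have "card (setsum_vec ?V ?X) * card (?V \<inter> ?X) = card ?V * card ?X" by (rule card_sum_int[OF sV sX])
    then have "card (setsum_vec ?V ?X) = ?q ^ n * ?q ^ (d - n + 1)" using c1 cV cX by simp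
    also have "\<dots> = ?q ^ (d + 1)" using assms(2) by (simp add: power_add[symmetric])
    finally have e: "card (setsum_vec ?V ?X) = ?q ^ (d + 1)" .
    have "setsum_vec ?V ?X \<subseteq> carrier_vec d" using subsp_sum[OF sV sX] unfolding subsp_def by blast
    then have "card (setsum_vec ?V ?X) \<le> ?q ^ d" by (rule card_le_carrier)
    moreover have "?q ^ d < ?q ^ (d + 1)" using q1 by (intro power_strict_increasing) auto
    ultimately show False using e by simp
  qed
  have P2: "subdim d (?V \<inter> ?X) = 1" if np: "nprime n d < d"
  proof -
    have n': "nprime n d = 2 * n - 1" using np unfolding nprime_def by simp
    let ?Y = "img ?V T"
    have sY: "subsp d ?Y" by (rule subsp_img[OF sV Tc])
    have "subdim d (setsum_vec ?V ?Y) = nprime n d" using assms(7) unfolding weak_doubling_def by blast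
    then have cS: "card (setsum_vec ?V ?Y) = ?q ^ (2 * n - 1)"
      using card_subsp[OF subsp_sum[OF sV sY]] n' by simp
    have cY: "card ?Y \<le> ?q ^ n" unfolding img_def using card_image_le[OF fV, of "\<lambda>x. vmul x T"] cV by simp
    have "card (setsum_vec ?V ?Y) * card (?V \<inter> ?Y) = card ?V * card ?Y" by (rule card_sum_int[OF sV sY])
    then have "?q ^ (2 * n - 1) * card (?V \<inter> ?Y) \<le> ?q ^ n * ?q ^ n" using cS cV cY by simp
    also have "\<dots> = ?q ^ (2 * n)" by (simp add: power_add[symmetric] mult_2)
    finally have A: "?q ^ (2 * n - 1) * card (?V \<inter> ?Y) \<le> ?q ^ (2 * n)" .
    have sub: "?V \<inter> ?X \<subseteq> ?V \<inter> ?Y"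
    proof
      fix x assume x: "x \<in> ?V \<inter> ?X"
      then have "vmul x T = x" unfolding fixsp_def by simp
      then have "x \<in> ?Y" unfolding img_def using x by (metis IntD1 image_eqI)
      then show "x \<in> ?V \<inter> ?Y" using x by blast
    qed
    have fVY: "finite (?V \<inter> ?Y)" using fV by simp
    have "card (?V \<inter> ?X) \<le> card (?V \<inter> ?Y)" by (rule card_mono[OF fVY sub])
    then have "?q ^ (2 * n - 1) * card (?V \<inter> ?X) \<le> ?q ^ (2 * n)" using A
      by (meson le_trans mult_le_mono2)
    moreover have "card (?V \<inter> ?X) = ?q ^ subdim d (?V \<inter> ?X)" by (rule card_subsp[OF subsp_int[OF sV sX]])
    ultimately have "?q ^ (2 * n - 1 + subdim d (?V \<inter> ?X)) \<le> ?q ^ (2 * n)" by (simp add: power_add)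
    then have "2 * n - 1 + subdim d (?V \<inter> ?X) \<le> 2 * n" using q1 by (rule power_le_imp_le_exp[rotated])
    then have "subdim d (?V \<inter> ?X) \<le> 1" using assms(1) by simp
    then show ?thesis using P1 by simp
  qed
  have P3: "subdim d (?F \<inter> ?X) = d - nprime n d" if np: "nprime n d < d"
  proof -
    have n': "nprime n d = 2 * n - 1" using np unfolding nprime_def by simp
    have "subdim d (setsum_vec ?F ?X) = d" using assms(7) np unfolding weak_doubling_def by blast
    then have cS: "card (setsum_vec ?F ?X) = ?q ^ d" using card_subsp[OF subsp_sum[OF sF sX]] by simp
    have "card (setsum_vec ?F ?X) * card (?F \<inter> ?X) = card ?F * card ?X" by (rule card_sum_int[OF sF sX])
    then have "?q ^ d * card (?F \<inter> ?X) = ?q ^ (d - n) * ?q ^ (d - n + 1)" using cS cF cX by simp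
    also have "\<dots> = ?q ^ d * ?q ^ (d - (2 * n - 1))"
    proof -
      have e: "d - n + (d - n + 1) = d + (d - (2 * n - 1))" using np n' assms(1) by simp
      have "?q ^ (d - n) * ?q ^ (d - n + 1) = ?q ^ (d - n + (d - n + 1))" by (rule power_add[symmetric])
      also have "\<dots> = ?q ^ (d + (d - (2 * n - 1)))" by (simp only: e)
      also have "\<dots> = ?q ^ d * ?q ^ (d - (2 * n - 1))" by (rule power_add)
      finally show ?thesis .
    qed
    finally have "card (?F \<inter> ?X) = ?q ^ (d - (2 * n - 1))" using q1 by simp
    then show ?thesis using subdim_eq[OF subsp_int[OF sF sX]] n' by simp
  qed
  show ?thesis using P1 P2 P3 by blast
qed

end
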